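(* Let $p$ be a prime, $n\ge2$, and $G$ an abstract group; regard $\mathbb{F}_p$ as a trivial $\hat{G}$-module. Then $\hat{G}$ satisfies the $n$-fold vanishing Massey product property if and only if for every (abstract) homomorphism $\varphi:G\to\overline{U_{n+1}(\mathbb{F}_p)}$ there exists an (abstract) homomorphism $\psi:G\to U_{n+1}(\mathbb{F}_p)$ such that $[\psi(g)]_{i,i+1}=[\varphi(g)]_{i,i+1}$ for every $g\in G$ and $1\le i\le n$.
   Context: $\hat{G}$ is the profinite completion of $G$: a profinite group with a homomorphism $i:G\to\hat{G}$ such that every homomorphism from $G$ to a profinite group factors uniquely through a continuous homomorphism from $\hat{G}$; $i(G)$ is dense in $\hat{G}$. $U_{n+1}(\mathbb{F}_p)$ is the group of upper unitriangular $(n+1)\times(n+1)$ matrices over $\mathbb{F}_p$; $\overline{U_{n+1}(\mathbb{F}_p)}$ is its quotient by the central subgroup of matrices supported (off the diagonal) only in the $(1,n+1)$ entry; $[\cdot]_{i,i+1}$ denotes the $(i,i+1)$ entry. A profinite group $H$ acting trivially on $\mathbb{F}_p$ satisfies the $n$-fold vanishing Massey product property if for every continuous homomorphism $\varphi:H\to\overline{U_{n+1}(\mathbb{F}_p)}$ there is a continuous homomorphism $\psi:H\to U_{n+1}(\mathbb{F}_p)$ with $[\psi(h)]_{i,i+1}=[\varphi(h)]_{i,i+1}$ for all $h\in H$, $1\le i\le n$. *)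

theory Defs
  imports "HOL-Analysis.Analysis" "HOL-Algebra.Algebra"
begin

definition fin_normal :: "('a, 'b) monoid_scheme \<Rightarrow> 'a set set" where
  "fin_normal G = {N. N \<lhd> G \<and> finite (rcosets\<^bsub>G\<^esub> N)}"

text \<open>The profinite completion, realised as the inverse limit of the finite quotients
  G/N (N normal of finite index): compatible families of cosets, with componentwise
  multiplication.\<close>
definition prof_compl :: "('a, 'b) monoid_scheme \<Rightarrow> ('a set \<Rightarrow> 'a set) monoid" where
  "prof_compl G =
    \<lparr> carrier = {x \<in> extensional (fin_normal G).
                   (\<forall>N\<in>fin_normal G. x N \<in> rcosets\<^bsub>G\<^esub> N) \<and>
                   (\<forall>N\<in>fin_normal G. \<forall>M\<in>fin_normal G. N \<subseteq> M \<longrightarrow> x N \<subseteq> x M)},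
      mult = (\<lambda>x y. \<lambda>N\<in>fin_normal G. x N <#>\<^bsub>G\<^esub> y N),
      one = (\<lambda>N\<in>fin_normal G. N) \<rparr>"

definition prof_top :: "('a, 'b) monoid_scheme \<Rightarrow> ('a set \<Rightarrow> 'a set) topology" where
  "prof_top G = subtopology
      (product_topology (\<lambda>N. discrete_topology (rcosets\<^bsub>G\<^esub> N)) (fin_normal G))
      (carrier (prof_compl G))"

text \<open>(n+1)x(n+1) upper unitriangular matrices over F_p, indices 1..n+1, entries
  represented by residues 0..p-1; entries outside the index range are 0.\<close>
definition unitri_grp :: "nat \<Rightarrow> nat \<Rightarrow> (nat \<Rightarrow> nat \<Rightarrow> nat) monoid" where
  "unitri_grp p n =
    \<lparr> carrier = {A. (\<forall>i j. A i j < p) \<and>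
                   (\<forall>i j. i \<notin> {1..n+1} \<or> j \<notin> {1..n+1} \<longrightarrow> A i j = 0) \<and>
                   (\<forall>i\<in>{1..n+1}. A i i = 1) \<and>
                   (\<forall>i j. j < i \<longrightarrow> A i j = 0)},
      mult = (\<lambda>A B i j. if i \<in> {1..n+1} \<and> j \<in> {1..n+1}
                         then (\<Sum>k\<in>{1..n+1}. A i k * B k j) mod p else 0),
      one = (\<lambda>i j. if i \<in> {1..n+1} \<and> i = j then 1 else 0) \<rparr>"

definition corner_sub :: "nat \<Rightarrow> nat \<Rightarrow> (nat \<Rightarrow> nat \<Rightarrow> nat) set" where
  "corner_sub p n = {A \<in> carrier (unitri_grp p n).
      \<forall>i j. i < j \<and> (i, j) \<noteq> (1, n+1) \<longrightarrow> A i j = 0}"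

definition ubar_grp :: "nat \<Rightarrow> nat \<Rightarrow> (nat \<Rightarrow> nat \<Rightarrow> nat) set monoid" where
  "ubar_grp p n = unitri_grp p n Mod corner_sub p n"

text \<open>For a topological group (H with topology T on its carrier) acting trivially on F_p.
  Finite groups carry the discrete topology. The (i,i+1)-entry of an element of the
  quotient is the (well defined, for n >= 2) (i,i+1)-entry of any representative.\<close>
definition massey_vanishing ::
    "nat \<Rightarrow> nat \<Rightarrow> ('h, 'c) monoid_scheme \<Rightarrow> 'h topology \<Rightarrow> bool" where
  "massey_vanishing p n H T \<longleftrightarrow>
     (\<forall>\<phi>\<in>hom H (ubar_grp p n).
        continuous_map T (discrete_topology (carrier (ubar_grp p n))) \<phi> \<longrightarrow>
        (\<exists>\<psi>\<in>hom H (unitri_grp p n).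
           continuous_map T (discrete_topology (carrier (unitri_grp p n))) \<psi> \<and>
           (\<forall>h\<in>carrier H. \<forall>i\<in>{1..n}. \<forall>A\<in>\<phi> h. \<psi> h i (Suc i) = A i (Suc i))))"

end

theory Submission
  imports Defs
begin

context group
begin

lemma fin_index_by_map:
  assumes H: "subgroup H G" and S: "finite S" and chi: "chi \<in> carrier G \<rightarrow> S"
    and eq: "\<And>g g'. g \<in> carrier G \<Longrightarrow> g' \<in> carrier G \<Longrightarrow> chi g = chi g' \<Longrightarrow> g \<otimes> inv g' \<in> H"
  shows "finite (rcosets H)"
proof -
  have "rcosets H \<subseteq> (\<lambda>s. H #> (SOME g. g \<in> carrier G \<and> chi g = s)) ` S"
  proof
    fix C assume "C \<in> rcosets H"
    then obtain g where g: "g \<in> carrier G" "C = H #> g" unfolding RCOSETS_def by auto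
    define g0 where "g0 = (SOME g'. g' \<in> carrier G \<and> chi g' = chi g)"
    have g0: "g0 \<in> carrier G \<and> chi g0 = chi g"
      unfolding g0_def by (rule someI[of _ g]) (use g in auto)
    then have "g0 \<otimes> inv g \<in> H" using eq g by auto
    then have "g0 \<in> H #> g" using subgroup.rcos_module_rev[OF H is_group] g g0 by auto
    then have "H #> g = H #> g0" using repr_independence[OF _ _ H] g by auto
    then show "C \<in> (\<lambda>s. H #> (SOME g. g \<in> carrier G \<and> chi g = s)) ` S"
      using g g0 chi unfolding g0_def by auto
  qed
  then show ?thesis using S finite_subset by blast
qed

lemma fin_normal_inter:
  assumes "N \<in> fin_normal G" "M \<in> fin_normal G"
  shows "N \<inter> M \<in> fin_normal G"
proof -
  have nN: "N \<lhd> G" and nM: "M \<lhd> G" and fN: "finite (rcosets N)" and fM: "finite (rcosets M)"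
    using assms by (auto simp: fin_normal_def)
  have sN: "subgroup N G" and sM: "subgroup M G" using nN nM normal_imp_subgroup by auto
  have "finite (rcosets (N \<inter> M))"
  proof (rule fin_index_by_map[where chi = "\<lambda>g. (N #> g, M #> g)" and S = "(rcosets N) \<times> (rcosets M)"])
    show "subgroup (N \<inter> M) G" using sN sM subgroups_Inter_pair by blast
    show "finite ((rcosets N) \<times> (rcosets M))" using fN fM by auto
    show "(\<lambda>g. (N #> g, M #> g)) \<in> carrier G \<rightarrow> (rcosets N) \<times> (rcosets M)"
      using rcosetsI sN sM subgroup.subset by blast
    fix g g' assume g: "g \<in> carrier G" "g' \<in> carrier G" "(N #> g, M #> g) = (N #> g', M #> g')"
    have "g \<in> N #> g'" using repr_independenceD[OF sN g(1)] g by auto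
    then have 1: "g \<otimes> inv g' \<in> N" using subgroup.rcos_module_imp[OF sN is_group] g by auto
    have "g \<in> M #> g'" using repr_independenceD[OF sM g(1)] g by auto
    then have 2: "g \<otimes> inv g' \<in> M" using subgroup.rcos_module_imp[OF sM is_group] g by auto
    show "g \<otimes> inv g' \<in> N \<inter> M" using 1 2 by auto
  qed
  then show ?thesis using normal_subgroup_intersect[OF nN nM] by (auto simp: fin_normal_def)
qed

lemma carrier_fin_normal: "carrier G \<in> fin_normal G"
proof -
  have "finite (rcosets (carrier G))"
    by (rule fin_index_by_map[where chi = "\<lambda>g. ()" and S = "{()}"]) (auto simp: subgroup_self)
  moreover have "carrier G \<lhd> G"
    by (rule normal_invI) (auto simp: subgroup_self)
  ultimately show ?thesis by (auto simp: fin_normal_def)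
qed

lemma fin_normal_lower:
  assumes "finite F" "F \<subseteq> fin_normal G"
  shows "\<exists>N\<in>fin_normal G. \<forall>M\<in>F. N \<subseteq> M"
  using assms
proof (induction F rule: finite_induct)
  case empty
  then show ?case using carrier_fin_normal by auto
next
  case (insert M F)
  then obtain N where "N \<in> fin_normal G" "\<forall>M\<in>F. N \<subseteq> M" by auto
  then show ?case using fin_normal_inter[of N M] insert by (intro bexI[of _ "N \<inter> M"]) auto
qed

lemma fin_normal_normal: "N \<in> fin_normal G \<Longrightarrow> N \<lhd> G"
  by (simp add: fin_normal_def)

lemma fin_normal_sub: "N \<in> fin_normal G \<Longrightarrow> subgroup N G"
  by (simp add: fin_normal_def normal_imp_subgroup)

lemma coset_rep:
  assumes "N \<in> fin_normal G" "C \<in> rcosets N" "a \<in> C"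
  shows "a \<in> carrier G" "C = N #> a"
proof -
  obtain r where r: "r \<in> carrier G" "C = N #> r" using assms(2) unfolding RCOSETS_def by auto
  show "a \<in> carrier G" using subgroup.elemrcos_carrier[OF fin_normal_sub[OF assms(1)] is_group r(1)] r assms(3) by auto
  show "C = N #> a" using repr_independence[OF _ r(1) fin_normal_sub[OF assms(1)]] r assms(3) by auto
qed

lemma coset_nonempty:
  assumes "N \<in> fin_normal G" "C \<in> rcosets N"
  shows "\<exists>a. a \<in> C"
proof -
  obtain r where r: "r \<in> carrier G" "C = N #> r" using assms(2) unfolding RCOSETS_def by auto
  then show ?thesis using rcos_self[OF r(1) fin_normal_sub[OF assms(1)]] by auto
qed

end

definition iota :: "('a, 'b) monoid_scheme \<Rightarrow> 'a \<Rightarrow> 'a set \<Rightarrow> 'a set" where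
  "iota G g = (\<lambda>N\<in>fin_normal G. N #>\<^bsub>G\<^esub> g)"

definition extf :: "('a \<Rightarrow> 'c) \<Rightarrow> 'a set \<Rightarrow> ('a set \<Rightarrow> 'a set) \<Rightarrow> 'c" where
  "extf f K x = f (SOME g. g \<in> x K)"

definition stab :: "('a, 'b) monoid_scheme \<Rightarrow> ('a \<Rightarrow> 'c) \<Rightarrow> 'a set" where
  "stab G f = {k \<in> carrier G. \<forall>a\<in>carrier G. f (k \<otimes>\<^bsub>G\<^esub> a) = f a}"

context group
begin

lemma PG_carrier: "x \<in> carrier (prof_compl G) \<longleftrightarrow> x \<in> extensional (fin_normal G) \<and>
   (\<forall>N\<in>fin_normal G. x N \<in> rcosets N) \<and>
   (\<forall>N\<in>fin_normal G. \<forall>M\<in>fin_normal G. N \<subseteq> M \<longrightarrow> x N \<subseteq> x M)"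
  by (simp add: prof_compl_def)

lemma PG_mult: "x \<otimes>\<^bsub>prof_compl G\<^esub> y = (\<lambda>N\<in>fin_normal G. x N <#> y N)"
  by (simp add: prof_compl_def)

lemma iota_carrier:
  assumes g: "g \<in> carrier G" shows "iota G g \<in> carrier (prof_compl G)"
  unfolding PG_carrier
proof (intro conjI ballI impI)
  show "iota G g \<in> extensional (fin_normal G)" unfolding iota_def by simp
  fix N assume N: "N \<in> fin_normal G"
  then show "iota G g N \<in> rcosets N"
    using g by (simp add: iota_def rcosetsI fin_normal_sub subgroup.subset)
  fix M assume "M \<in> fin_normal G" "N \<subseteq> M"
  then show "iota G g N \<subseteq> iota G g M" using N unfolding iota_def r_coset_def by auto
qed

lemma PG_mult_closed:
  assumes x: "x \<in> carrier (prof_compl G)" and y: "y \<in> carrier (prof_compl G)"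
  shows "x \<otimes>\<^bsub>prof_compl G\<^esub> y \<in> carrier (prof_compl G)"
  unfolding PG_carrier PG_mult
proof (intro conjI ballI impI)
  fix N M assume "N \<in> fin_normal G" "M \<in> fin_normal G" "N \<subseteq> M"
  moreover have "x N \<subseteq> x M" "y N \<subseteq> y M" using x y calculation unfolding PG_carrier by blast+
  ultimately show "(\<lambda>N\<in>fin_normal G. x N <#> y N) N \<subseteq> (\<lambda>N\<in>fin_normal G. x N <#> y N) M"
    using mono_set_mult[of "x N" "x M" "y N" "y M" G] by simp
next
  fix N assume N: "N \<in> fin_normal G"
  have "x N \<in> rcosets N" "y N \<in> rcosets N" using x y N unfolding PG_carrier by blast+
  then show "(\<lambda>N\<in>fin_normal G. x N <#> y N) N \<in> rcosets N"
    using N normal.setmult_closed[OF fin_normal_normal[OF N]] by simp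
qed simp

lemma iota_mult:
  assumes "g \<in> carrier G" "h \<in> carrier G"
  shows "iota G (g \<otimes> h) = iota G g \<otimes>\<^bsub>prof_compl G\<^esub> iota G h"
  unfolding PG_mult iota_def
  using assms by (intro restrict_ext) (auto simp: normal.rcos_sum fin_normal_normal)

lemma stab_fin_normal:
  assumes f: "f \<in> hom G F" and fin: "finite (carrier F)"
  shows "stab G f \<in> fin_normal G"
proof -
  have fm: "\<And>x y. x \<in> carrier G \<Longrightarrow> y \<in> carrier G \<Longrightarrow> f (x \<otimes> y) = f x \<otimes>\<^bsub>F\<^esub> f y"
    using f by (auto simp: hom_def)
  have sg: "subgroup (stab G f) G"
  proof (rule subgroupI)
    show "stab G f \<subseteq> carrier G" by (auto simp: stab_def)
    show "stab G f \<noteq> {}" by (auto simp: stab_def intro!: exI[of _ \<one>])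
    fix a b assume a: "a \<in> stab G f"
    then have ac: "a \<in> carrier G" by (auto simp: stab_def)
    show "inv a \<in> stab G f" unfolding stab_def
    proof (safe)
      show "inv a \<in> carrier G" using ac by auto
      fix c assume c: "c \<in> carrier G"
      have "f c = f (a \<otimes> (inv a \<otimes> c))" using ac c by (simp add: m_assoc[symmetric])
      also have "\<dots> = f (inv a \<otimes> c)" using a ac c by (auto simp: stab_def)
      finally show "f (inv a \<otimes> c) = f c" by simp
    qed
    assume b: "b \<in> stab G f"
    then have bc: "b \<in> carrier G" by (auto simp: stab_def)
    show "a \<otimes> b \<in> stab G f" using a b ac bc by (auto simp: stab_def m_assoc)
  qed
  have nm: "stab G f \<lhd> G"
  proof (rule normal_invI[OF sg])
    fix x h assume x: "x \<in> carrier G" and h: "h \<in> stab G f"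
    then have hc: "h \<in> carrier G" by (auto simp: stab_def)
    show "x \<otimes> h \<otimes> inv x \<in> stab G f" unfolding stab_def
    proof safe
      show "x \<otimes> h \<otimes> inv x \<in> carrier G" using x hc by auto
      fix a assume a: "a \<in> carrier G"
      have "f (x \<otimes> h \<otimes> inv x \<otimes> a) = f x \<otimes>\<^bsub>F\<^esub> f (h \<otimes> (inv x \<otimes> a))"
        using x hc a by (simp add: m_assoc fm)
      also have "\<dots> = f x \<otimes>\<^bsub>F\<^esub> f (inv x \<otimes> a)" using h x a by (auto simp: stab_def)
      also have "\<dots> = f (x \<otimes> (inv x \<otimes> a))" using x a by (simp add: fm)
      also have "\<dots> = f a" using x a by (simp add: m_assoc[symmetric])
      finally show "f (x \<otimes> h \<otimes> inv x \<otimes> a) = f a" .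
    qed
  qed
  have "finite (rcosets (stab G f))"
  proof (rule fin_index_by_map[OF sg fin])
    show "f \<in> carrier G \<rightarrow> carrier F" using f by (auto simp: hom_def)
    fix g g' assume g: "g \<in> carrier G" "g' \<in> carrier G" "f g = f g'"
    show "g \<otimes> inv g' \<in> stab G f" unfolding stab_def
    proof safe
      show "g \<otimes> inv g' \<in> carrier G" using g by auto
      fix a assume a: "a \<in> carrier G"
      have "f (g \<otimes> inv g' \<otimes> a) = f g \<otimes>\<^bsub>F\<^esub> f (inv g' \<otimes> a)" using g a by (simp add: m_assoc fm)
      also have "\<dots> = f (g' \<otimes> (inv g' \<otimes> a))" using g a by (simp add: fm)
      also have "\<dots> = f a" using g a by (simp add: m_assoc[symmetric])
      finally show "f (g \<otimes> inv g' \<otimes> a) = f a" .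
    qed
  qed
  then show ?thesis using nm by (simp add: fin_normal_def)
qed

lemma stab_const:
  assumes K: "K \<in> fin_normal G" "K \<subseteq> stab G f" and C: "C \<in> rcosets K" and cd: "c \<in> C" "d \<in> C"
  shows "f c = f d"
proof -
  obtain r where r: "r \<in> carrier G" "C = K #> r" using C unfolding RCOSETS_def by auto
  have "\<And>c. c \<in> C \<Longrightarrow> f c = f r"
  proof -
    fix c assume "c \<in> C"
    then obtain k where "k \<in> K" "c = k \<otimes> r" using r by (auto simp: r_coset_def)
    then show "f c = f r" using K r by (auto simp: stab_def)
  qed
  then show ?thesis using cd by auto
qed

lemma PG_top: "topspace (prof_top G) = carrier (prof_compl G)"
  proof -
    have "carrier (prof_compl G) \<subseteq> (\<Pi>\<^sub>E N\<in>fin_normal G. rcosets N)"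
    proof
      fix x assume "x \<in> carrier (prof_compl G)"
      then have "x \<in> extensional (fin_normal G)" "\<forall>N\<in>fin_normal G. x N \<in> rcosets N"
        unfolding PG_carrier by auto
      then show "x \<in> (\<Pi>\<^sub>E N\<in>fin_normal G. rcosets N)" by (simp add: PiE_iff)
    qed
    then show ?thesis unfolding prof_top_def topspace_subtopology topspace_product_topology
      topspace_discrete_topology by (simp add: Int_absorb1)
  qed

lemma extf_props:
  assumes f: "f \<in> hom G F" and K: "K \<in> fin_normal G" "K \<subseteq> stab G f"
  shows "extf f K \<in> hom (prof_compl G) F"
    and "\<And>g. g \<in> carrier G \<Longrightarrow> extf f K (iota G g) = f g"
    and "continuous_map (prof_top G) (discrete_topology (carrier F)) (extf f K)"
    and "\<And>x. x \<in> carrier (prof_compl G) \<Longrightarrow> (SOME g. g \<in> x K) \<in> x K"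
proof -
  have fm: "\<And>x y. x \<in> carrier G \<Longrightarrow> y \<in> carrier G \<Longrightarrow> f (x \<otimes> y) = f x \<otimes>\<^bsub>F\<^esub> f y"
    and fc: "\<And>x. x \<in> carrier G \<Longrightarrow> f x \<in> carrier F"
    using f by (auto simp: hom_def)
  have xK: "x K \<in> rcosets K" if "x \<in> carrier (prof_compl G)" for x
    using that K by (auto simp: PG_carrier)
  show some: "(SOME g. g \<in> x K) \<in> x K" if xc: "x \<in> carrier (prof_compl G)" for x
  proof -
    obtain a where "a \<in> x K" using coset_nonempty[OF K(1) xK[OF xc]] by blast
    then show ?thesis by (rule someI)
  qed
  have somec: "(SOME g. g \<in> x K) \<in> carrier G" if "x \<in> carrier (prof_compl G)" for x
    using coset_rep(1)[OF K(1) xK[OF that] some[OF that]] .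
  have ec: "extf f K x \<in> carrier F" if "x \<in> carrier (prof_compl G)" for x
    unfolding extf_def using somec[OF that] fc by auto
  show "extf f K \<in> hom (prof_compl G) F"
  proof (rule homI)
    show "extf f K x \<in> carrier F" if "x \<in> carrier (prof_compl G)" for x using ec that .
    fix x y assume x: "x \<in> carrier (prof_compl G)" and y: "y \<in> carrier (prof_compl G)"
    define a where "a = (SOME g. g \<in> x K)"
    define b where "b = (SOME g. g \<in> y K)"
    have a: "a \<in> x K" "a \<in> carrier G" using some[OF x] somec[OF x] by (auto simp: a_def)
    have b: "b \<in> y K" "b \<in> carrier G" using some[OF y] somec[OF y] by (auto simp: b_def)
    have xy: "x \<otimes>\<^bsub>prof_compl G\<^esub> y \<in> carrier (prof_compl G)" using PG_mult_closed x y .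
    have xyK: "(x \<otimes>\<^bsub>prof_compl G\<^esub> y) K = x K <#> y K" using K by (simp add: PG_mult)
    have ab: "a \<otimes> b \<in> (x \<otimes>\<^bsub>prof_compl G\<^esub> y) K" using a b xyK by (auto simp: set_mult_def)
    have "extf f K (x \<otimes>\<^bsub>prof_compl G\<^esub> y) = f (a \<otimes> b)"
      unfolding extf_def by (rule stab_const[OF K xK[OF xy] some[OF xy] ab])
    then show "extf f K (x \<otimes>\<^bsub>prof_compl G\<^esub> y) = extf f K x \<otimes>\<^bsub>F\<^esub> extf f K y"
      using fm a b by (simp add: extf_def a_def b_def)
  qed
  show "extf f K (iota G g) = f g" if g: "g \<in> carrier G" for g
  proof -
    have i: "iota G g \<in> carrier (prof_compl G)" using iota_carrier g .
    have "g \<in> iota G g K" using K g by (simp add: iota_def rcos_self fin_normal_sub)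
    then show ?thesis unfolding extf_def by (rule stab_const[OF K xK[OF i] some[OF i]])
  qed
  have c1: "continuous_map (prof_top G) (discrete_topology (rcosets K)) (\<lambda>x. x K)"
    unfolding prof_top_def
    by (rule continuous_map_from_subtopology[OF continuous_map_product_projection[OF K(1)]])
  have c2: "continuous_map (discrete_topology (rcosets K)) (discrete_topology (carrier F))
       (\<lambda>C. f (SOME g. g \<in> C))"
  proof (simp only: continuous_map_from_discrete_topology topspace_discrete_topology, rule Pi_I)
    fix C assume C: "C \<in> rcosets K"
    obtain a where "a \<in> C" using coset_nonempty[OF K(1) C] by blast
    then have "(SOME g. g \<in> C) \<in> C" by (rule someI)
    then show "f (SOME g. g \<in> C) \<in> carrier F" using coset_rep(1)[OF K(1) C] fc by blast
  qed
  show "continuous_map (prof_top G) (discrete_topology (carrier F)) (extf f K)"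
  proof -
    have "extf f K = (\<lambda>x. f (SOME g. g \<in> x K))" by (rule ext) (simp add: extf_def)
    then show ?thesis using continuous_map_compose[OF c1 c2] by (simp add: o_def)
  qed
qed

end

context group
begin

lemma PG_ext: "x \<in> carrier (prof_compl G) \<Longrightarrow> x \<in> extensional (fin_normal G)"
  by (simp add: PG_carrier)
lemma PG_rcos: "x \<in> carrier (prof_compl G) \<Longrightarrow> N \<in> fin_normal G \<Longrightarrow> x N \<in> rcosets N"
  by (simp add: PG_carrier)
lemma PG_mono: "x \<in> carrier (prof_compl G) \<Longrightarrow> N \<in> fin_normal G \<Longrightarrow> M \<in> fin_normal G \<Longrightarrow> N \<subseteq> M \<Longrightarrow> x N \<subseteq> x M"
  by (simp add: PG_carrier)

lemma factor_cont:
  assumes phi: "\<phi> \<in> hom (prof_compl G) H"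
    and cont: "continuous_map (prof_top G) (discrete_topology (carrier H)) \<phi>"
  shows "\<exists>N\<in>fin_normal G. \<forall>x\<in>carrier (prof_compl G). \<forall>g\<in>carrier G.
            x N = N #> g \<longrightarrow> \<phi> x = \<phi> (iota G g)"
proof -
  let ?P = "prof_compl G"
  let ?X = "\<lambda>N. discrete_topology (rcosets N)"
  have pm: "\<And>x y. x \<in> carrier ?P \<Longrightarrow> y \<in> carrier ?P \<Longrightarrow> \<phi> (x \<otimes>\<^bsub>?P\<^esub> y) = \<phi> x \<otimes>\<^bsub>H\<^esub> \<phi> y"
    and pc: "\<And>x. x \<in> carrier ?P \<Longrightarrow> \<phi> x \<in> carrier H"
    using phi by (auto simp: hom_def)
  define e where "e = iota G \<one>"
  have ec: "e \<in> carrier ?P" unfolding e_def by (rule iota_carrier) simp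
  define v where "v = \<phi> e"
  have vc: "v \<in> carrier H" unfolding v_def using pc ec .
  have "openin (prof_top G) {x \<in> topspace (prof_top G). \<phi> x \<in> {v}}"
    by (rule openin_continuous_map_preimage[OF cont]) (use vc in simp)
  then obtain T where T: "openin (product_topology ?X (fin_normal G)) T"
    and Teq: "{x \<in> carrier ?P. \<phi> x \<in> {v}} = T \<inter> carrier ?P"
    unfolding PG_top unfolding prof_top_def openin_subtopology by blast
  have "e \<in> {x \<in> carrier ?P. \<phi> x \<in> {v}}" using ec by (simp add: v_def)
  then have eT: "e \<in> T" using Teq by blast
  obtain U where U: "finite {i \<in> fin_normal G. U i \<noteq> topspace (?X i)}"
    "e \<in> Pi\<^sub>E (fin_normal G) U" "Pi\<^sub>E (fin_normal G) U \<subseteq> T"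
  proof -
    have "\<forall>x\<in>T. \<exists>U. finite {i \<in> fin_normal G. U i \<noteq> topspace (?X i)} \<and>
       (\<forall>i\<in>fin_normal G. openin (?X i) (U i)) \<and> x \<in> Pi\<^sub>E (fin_normal G) U \<and> Pi\<^sub>E (fin_normal G) U \<subseteq> T"
      using T by (simp only: openin_product_topology_alt)
    then have "\<exists>U. finite {i \<in> fin_normal G. U i \<noteq> topspace (?X i)} \<and>
       (\<forall>i\<in>fin_normal G. openin (?X i) (U i)) \<and> e \<in> Pi\<^sub>E (fin_normal G) U \<and> Pi\<^sub>E (fin_normal G) U \<subseteq> T"
      using eT by (rule bspec)
    then show ?thesis using that by blast
  qed
  obtain N where N: "N \<in> fin_normal G" "\<forall>M\<in>{i \<in> fin_normal G. U i \<noteq> topspace (?X i)}. N \<subseteq> M"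
  proof -
    have "{i \<in> fin_normal G. U i \<noteq> topspace (?X i)} \<subseteq> fin_normal G" by (rule subsetI) simp
    from fin_normal_lower[OF U(1) this] show ?thesis using that by blast
  qed
  have key: "\<phi> w = v" if w: "w \<in> carrier ?P" "w N = N" for w
  proof -
    have "w \<in> Pi\<^sub>E (fin_normal G) U"
      unfolding PiE_iff
    proof (intro conjI ballI)
      show "w \<in> extensional (fin_normal G)" using PG_ext[OF w(1)] .
      fix M assume M: "M \<in> fin_normal G"
      have wM: "w M \<in> rcosets M" using PG_rcos[OF w(1) M] .
      show "w M \<in> U M"
      proof (cases "U M = rcosets M")
        case True then show ?thesis using wM by simp
      next
        case False
        then have NM: "N \<subseteq> M" using N M by auto
        then have "w N \<subseteq> w M" using PG_mono[OF w(1) N(1) M] by blast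
        moreover have "\<one> \<in> N" using fin_normal_sub[OF N(1)] subgroup.one_closed by blast
        ultimately have "\<one> \<in> w M" using w by auto
        then have "w M = M #> \<one>" using coset_rep(2)[OF M wM] by simp
        also have "\<dots> = e M" using M by (simp add: e_def iota_def)
        finally show ?thesis using U(2) M by (auto simp: PiE_iff)
      qed
    qed
    then have "w \<in> T" using U(3) by blast
    then have "w \<in> T \<inter> carrier ?P" using w(1) by blast
    then have "w \<in> {x \<in> carrier ?P. \<phi> x \<in> {v}}" using Teq by simp
    then show ?thesis by simp
  qed
  have main: "\<phi> x = \<phi> (iota G g)" if x: "x \<in> carrier ?P" and g: "g \<in> carrier G" and xN: "x N = N #> g" for x g
  proof -
    define w where "w = x \<otimes>\<^bsub>?P\<^esub> iota G (inv g)"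
    have wc: "w \<in> carrier ?P" unfolding w_def using PG_mult_closed x iota_carrier g by simp
    have nN: "N \<lhd> G" using fin_normal_normal[OF N(1)] .
    have "w N = (N #> g) <#> (N #> inv g)" using N(1) xN by (simp add: w_def PG_mult iota_def)
    also have "\<dots> = N #> (g \<otimes> inv g)" using g normal.rcos_sum[OF nN] by simp
    also have "\<dots> = N" using coset_mult_one[OF subgroup.subset[OF fin_normal_sub[OF N(1)]]] g by simp
    finally have wv: "\<phi> w = v" using key wc by blast
    have xw: "x = w \<otimes>\<^bsub>?P\<^esub> iota G g"
    proof (rule ext)
      fix M show "x M = (w \<otimes>\<^bsub>?P\<^esub> iota G g) M"
      proof (cases "M \<in> fin_normal G")
        case True
        have nM: "M \<lhd> G" using fin_normal_normal[OF True] .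
        have xM: "x M \<in> rcosets M" using PG_rcos[OF x True] .
        obtain a where a: "a \<in> x M" using coset_nonempty[OF True xM] by blast
        have ac: "a \<in> carrier G" and xa: "x M = M #> a" using coset_rep[OF True xM a] by auto
        have "(w \<otimes>\<^bsub>?P\<^esub> iota G g) M = ((M #> a) <#> (M #> inv g)) <#> (M #> g)"
          using True xa by (simp add: w_def PG_mult iota_def)
        also have "\<dots> = M #> (a \<otimes> inv g \<otimes> g)" using ac g normal.rcos_sum[OF nM] by simp
        also have "\<dots> = M #> a" using ac g by (simp add: m_assoc)
        finally show ?thesis using xa by simp
      next
        case False
        have "x M = undefined" using PG_ext[OF x] False by (rule extensional_arb)
        then show ?thesis using False by (simp add: PG_mult)
      qed
    qed
    have "\<phi> x = \<phi> (w \<otimes>\<^bsub>?P\<^esub> iota G g)" using xw by (rule arg_cong)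
    also have "\<dots> = \<phi> w \<otimes>\<^bsub>H\<^esub> \<phi> (iota G g)" by (rule pm[OF wc iota_carrier[OF g]])
    also have "\<dots> = \<phi> e \<otimes>\<^bsub>H\<^esub> \<phi> (iota G g)" by (simp only: wv v_def)
    also have "\<dots> = \<phi> (e \<otimes>\<^bsub>?P\<^esub> iota G g)" by (rule pm[OF ec iota_carrier[OF g], symmetric])
    also have "\<dots> = \<phi> (iota G (\<one> \<otimes> g))" by (simp only: e_def iota_mult[OF one_closed g])
    also have "\<dots> = \<phi> (iota G g)" using g by simp
    finally show ?thesis .
  qed
  show ?thesis
  proof (rule bexI[OF _ N(1)], intro ballI impI)
    fix x g assume "x \<in> carrier ?P" "g \<in> carrier G" "x N = N #> g"
    then show "\<phi> x = \<phi> (iota G g)" by (rule main)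
  qed
qed

end

definition bnd :: "nat \<Rightarrow> nat \<Rightarrow> (nat \<Rightarrow> nat \<Rightarrow> nat) set" where
  "bnd p m = {B. \<forall>i j. B i j < p \<and> (i \<notin> {1..m} \<or> j \<notin> {1..m} \<longrightarrow> B i j = 0)}"

lemma finite_bnd: "finite (bnd p m)"
proof -
  define D where "D = {1..m} \<times> {1..m}"
  have "bnd p m \<subseteq> (\<lambda>f i j. if (i, j) \<in> D then f (i, j) else 0) ` (Pi\<^sub>E D (\<lambda>_. {..<p}))"
  proof
    fix B assume B: "B \<in> bnd p m"
    have "B = (\<lambda>i j. if (i, j) \<in> D then restrict (\<lambda>(i, j). B i j) D (i, j) else 0)"
      using B by (auto simp: bnd_def D_def fun_eq_iff)
    moreover have "restrict (\<lambda>(i, j). B i j) D \<in> Pi\<^sub>E D (\<lambda>_. {..<p})"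
      using B by (auto simp: bnd_def)
    ultimately show "B \<in> (\<lambda>f i j. if (i, j) \<in> D then f (i, j) else 0) ` (Pi\<^sub>E D (\<lambda>_. {..<p}))"
      by blast
  qed
  moreover have "finite (Pi\<^sub>E D (\<lambda>_. {..<p}))" unfolding D_def by (intro finite_PiE) auto
  ultimately show ?thesis using finite_subset by blast
qed

lemma unitri_bnd: "carrier (unitri_grp p n) \<subseteq> bnd p (n+1)"
  by (auto simp: unitri_grp_def bnd_def)

lemma finite_unitri: "finite (carrier (unitri_grp p n))"
  using finite_subset[OF unitri_bnd finite_bnd] .

lemma finite_ubar:
  assumes "p > 0" shows "finite (carrier (ubar_grp p n))"
proof -
  have "carrier (ubar_grp p n) \<subseteq> Pow (bnd p (n+1))"
  proof
    fix C assume "C \<in> carrier (ubar_grp p n)"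
    then obtain a where "C = corner_sub p n #>\<^bsub>unitri_grp p n\<^esub> a"
      by (auto simp: ubar_grp_def FactGroup_def RCOSETS_def)
    then show "C \<in> Pow (bnd p (n+1))"
      using assms by (auto simp: r_coset_def unitri_grp_def bnd_def)
  qed
  then show ?thesis using finite_subset finite_bnd by blast
qed


theorem mainTheorem5:
  fixes G :: "('g, 'b) monoid_scheme" and p n :: nat
  assumes "Factorial_Ring.prime p" and "n \<ge> 2" and "group G"
  shows "massey_vanishing p n (prof_compl G) (prof_top G) \<longleftrightarrow>
    (\<forall>\<phi>\<in>hom G (ubar_grp p n). \<exists>\<psi>\<in>hom G (unitri_grp p n).
        \<forall>g\<in>carrier G. \<forall>i\<in>{1..n}. \<forall>A\<in>\<phi> g. \<psi> g i (Suc i) = A i (Suc i))"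
proof -
  interpret group G by fact
  have p0: "p > 0" using assms(1) prime_gt_0_nat by blast
  let ?P = "prof_compl G"
  let ?U = "unitri_grp p n"
  let ?B = "ubar_grp p n"
  show ?thesis
  proof
    assume mv: "massey_vanishing p n ?P (prof_top G)"
    show "\<forall>\<phi>\<in>hom G ?B. \<exists>\<psi>\<in>hom G ?U.
        \<forall>g\<in>carrier G. \<forall>i\<in>{1..n}. \<forall>A\<in>\<phi> g. \<psi> g i (Suc i) = A i (Suc i)"
    proof
      fix \<phi> assume phi: "\<phi> \<in> hom G ?B"
      define K where "K = stab G \<phi>"
      have K: "K \<in> fin_normal G" "K \<subseteq> stab G \<phi>"
        using stab_fin_normal[OF phi finite_ubar[OF p0]] by (auto simp: K_def)
      note E = extf_props[OF phi K]
      obtain \<Psi> where Psi: "\<Psi> \<in> hom ?P ?U"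
        and cond: "\<forall>h\<in>carrier ?P. \<forall>i\<in>{1..n}. \<forall>A\<in>extf \<phi> K h. \<Psi> h i (Suc i) = A i (Suc i)"
        using mv E(1,3) unfolding massey_vanishing_def by blast
      define \<psi> where "\<psi> = (\<lambda>g. \<Psi> (iota G g))"
      have "\<psi> \<in> hom G ?U"
      proof (rule homI)
        fix g assume "g \<in> carrier G"
        then show "\<psi> g \<in> carrier ?U" using Psi iota_carrier by (auto simp: \<psi>_def hom_def)
      next
        fix g h assume g: "g \<in> carrier G" and h: "h \<in> carrier G"
        show "\<psi> (g \<otimes>\<^bsub>G\<^esub> h) = \<psi> g \<otimes>\<^bsub>?U\<^esub> \<psi> h"
          unfolding \<psi>_def iota_mult[OF g h]
          by (rule hom_mult[OF Psi iota_carrier[OF g] iota_carrier[OF h]])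
      qed
      moreover have "\<forall>g\<in>carrier G. \<forall>i\<in>{1..n}. \<forall>A\<in>\<phi> g. \<psi> g i (Suc i) = A i (Suc i)"
      proof (intro ballI)
        fix g i A assume g: "g \<in> carrier G" and i: "i \<in> {1..n}" and A: "A \<in> \<phi> g"
        have "A \<in> extf \<phi> K (iota G g)" using E(2)[OF g] A by simp
        then show "\<psi> g i (Suc i) = A i (Suc i)"
          using cond iota_carrier[OF g] i by (simp add: \<psi>_def)
      qed
      ultimately show "\<exists>\<psi>\<in>hom G ?U.
        \<forall>g\<in>carrier G. \<forall>i\<in>{1..n}. \<forall>A\<in>\<phi> g. \<psi> g i (Suc i) = A i (Suc i)" by blast
    qed
  next
    assume R: "\<forall>\<phi>\<in>hom G ?B. \<exists>\<psi>\<in>hom G ?U.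
        \<forall>g\<in>carrier G. \<forall>i\<in>{1..n}. \<forall>A\<in>\<phi> g. \<psi> g i (Suc i) = A i (Suc i)"
    show "massey_vanishing p n ?P (prof_top G)"
      unfolding massey_vanishing_def
    proof (intro ballI impI)
      fix \<phi> assume phi: "\<phi> \<in> hom ?P ?B"
        and cont: "continuous_map (prof_top G) (discrete_topology (carrier ?B)) \<phi>"
      obtain N where N: "N \<in> fin_normal G"
        and fac: "\<forall>x\<in>carrier ?P. \<forall>g\<in>carrier G. x N = N #>\<^bsub>G\<^esub> g \<longrightarrow> \<phi> x = \<phi> (iota G g)"
        using factor_cont[OF phi cont] by blast
      define \<phi>' where "\<phi>' = (\<lambda>g. \<phi> (iota G g))"
      have "\<phi>' \<in> hom G ?B"
      proof (rule homI)
        fix g assume "g \<in> carrier G"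
        then show "\<phi>' g \<in> carrier ?B" using phi iota_carrier by (auto simp: \<phi>'_def hom_def)
      next
        fix g h assume g: "g \<in> carrier G" and h: "h \<in> carrier G"
        show "\<phi>' (g \<otimes>\<^bsub>G\<^esub> h) = \<phi>' g \<otimes>\<^bsub>?B\<^esub> \<phi>' h"
          unfolding \<phi>'_def iota_mult[OF g h]
          by (rule hom_mult[OF phi iota_carrier[OF g] iota_carrier[OF h]])
      qed
      then obtain \<psi> where psi: "\<psi> \<in> hom G ?U"
        and c: "\<forall>g\<in>carrier G. \<forall>i\<in>{1..n}. \<forall>A\<in>\<phi>' g. \<psi> g i (Suc i) = A i (Suc i)"
        using R by blast
      define K where "K = N \<inter> stab G \<psi>"
      have K: "K \<in> fin_normal G" "K \<subseteq> stab G \<psi>"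
        using fin_normal_inter[OF N stab_fin_normal[OF psi finite_unitri]] by (auto simp: K_def)
      note E = extf_props[OF psi K]
      have "\<forall>h\<in>carrier ?P. \<forall>i\<in>{1..n}. \<forall>A\<in>\<phi> h. extf \<psi> K h i (Suc i) = A i (Suc i)"
      proof (intro ballI)
        fix h i A assume h: "h \<in> carrier ?P" and i: "i \<in> {1..n}" and A: "A \<in> \<phi> h"
        define g where "g = (SOME g. g \<in> h K)"
        have ghK: "g \<in> h K" using E(4)[OF h] by (simp add: g_def)
        have "h K \<subseteq> h N" using PG_mono[OF h K(1) N] by (simp add: K_def)
        then have ghN: "g \<in> h N" using ghK by blast
        have gc: "g \<in> carrier G" using coset_rep(1)[OF N PG_rcos[OF h N] ghN] .
        have "h N = N #>\<^bsub>G\<^esub> g" using coset_rep(2)[OF N PG_rcos[OF h N] ghN] .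
        then have "\<phi> h = \<phi>' g" using fac h gc by (simp add: \<phi>'_def)
        then have "A \<in> \<phi>' g" using A by simp
        then have "\<psi> g i (Suc i) = A i (Suc i)" using c gc i by blast
        then show "extf \<psi> K h i (Suc i) = A i (Suc i)" by (simp add: extf_def g_def)
      qed
      then show "\<exists>\<psi>\<in>hom ?P ?U. continuous_map (prof_top G) (discrete_topology (carrier ?U)) \<psi> \<and>
           (\<forall>h\<in>carrier ?P. \<forall>i\<in>{1..n}. \<forall>A\<in>\<phi> h. \<psi> h i (Suc i) = A i (Suc i))"
        using E(1,3) by blast
    qed
  qed
qed

end
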